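(* Let $f$ be a $C^3$ incompressible velocity field ($\operatorname{tr}\nabla f\equiv0$) on $D\subset\mathbb{R}\times\mathbb{R}^3$, and let $(t_0,x)\in D$ with $d_f:=\det\nabla f(t_0,x)\neq0$. Then there exists $T_{\min}>0$ such that for every $T\in(0,T_{\min})$ the point $x$ is mesohyperbolic on $[t_0,t_0+T]$, i.e. no eigenvalue of $\nabla\psi_T(x)$ lies on the unit circle.
   Context: $\phi(t,t_0,x)$ is the solution of $\dot x=f(t,x)$ with $x(t_0)=x$; the time-$T$ map is $\psi_T(x)=\phi(t_0+T,t_0,x)$. The mesochronic velocity is $\tilde f_T(x)=\frac1T\int_{t_0}^{t_0+T}f(\tau,\phi(\tau,t_0,x))\,d\tau$, with $\nabla\psi_T=\mathrm{Id}+T\nabla\tilde f_T$ and $\nabla\tilde f_T(x)\to\nabla f(t_0,x)$ as $T\to0^+$. A point is mesohyperbolic on $[t_0,t_0+T]$ if no eigenvalue of $\nabla\psi_T(x)$ has modulus $1$. *)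

theory Defs
  imports "HOL-Analysis.Analysis"
begin

definition C1_on :: "'a::real_normed_vector set \<Rightarrow> ('a \<Rightarrow> 'b::real_normed_vector) \<Rightarrow> bool" where
  "C1_on D g \<longleftrightarrow> (\<exists>g'. (\<forall>z\<in>D. (g has_derivative blinfun_apply (g' z)) (at z)) \<and> continuous_on D g')"

definition C2_on :: "'a::real_normed_vector set \<Rightarrow> ('a \<Rightarrow> 'b::real_normed_vector) \<Rightarrow> bool" where
  "C2_on D g \<longleftrightarrow> (\<exists>g'. (\<forall>z\<in>D. (g has_derivative blinfun_apply (g' z)) (at z)) \<and> C1_on D g')"

definition C3_on :: "'a::real_normed_vector set \<Rightarrow> ('a \<Rightarrow> 'b::real_normed_vector) \<Rightarrow> bool" where
  "C3_on D g \<longleftrightarrow> (\<exists>g'. (\<forall>z\<in>D. (g has_derivative blinfun_apply (g' z)) (at z)) \<and> C2_on D g')"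

definition time_map :: "(real \<Rightarrow> real \<Rightarrow> real^'n \<Rightarrow> real^'n) \<Rightarrow> real \<Rightarrow> real \<Rightarrow> real^'n \<Rightarrow> real^'n" where
  "time_map \<phi> t0 T y = \<phi> (t0 + T) t0 y"

definition complexify :: "real^'n^'n \<Rightarrow> complex^'n^'n" where
  "complexify A = (\<chi> i j. complex_of_real (A $ i $ j))"

definition is_eigenvalue :: "real^'n^'n \<Rightarrow> complex \<Rightarrow> bool" where
  "is_eigenvalue A c \<longleftrightarrow> (\<exists>v::complex^'n. v \<noteq> 0 \<and> complexify A *v v = c *s v)"

definition mesohyperbolic :: "(real \<Rightarrow> real \<Rightarrow> real^'n \<Rightarrow> real^'n) \<Rightarrow> real \<Rightarrow> real \<Rightarrow> real^'n \<Rightarrow> bool" where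
  "mesohyperbolic \<phi> t0 T x \<longleftrightarrow>
     (\<forall>c. is_eigenvalue (jacobian (time_map \<phi> t0 T) (at x)) c \<longrightarrow> cmod c \<noteq> 1)"

end

theory Submission
  imports Defs
begin


lemma cmv_nth: "(complexify B *v v) $ i = (\<Sum>j\<in>UNIV. of_real (B$i$j) * v$j)"
  by (simp add: complexify_def matrix_vector_mult_def)

definition Nm :: "real^'n^'n \<Rightarrow> real" where "Nm B = (\<Sum>i\<in>UNIV. \<Sum>j\<in>UNIV. \<bar>B$i$j\<bar>)"

lemma norm_le_l1_cvec: "norm (w::complex^'n) \<le> (\<Sum>i\<in>UNIV. norm (w$i))"
  unfolding norm_vec_def by (rule L2_set_le_sum) auto

lemma norm_cmv: "norm (complexify B *v v) \<le> Nm B * norm v"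
proof -
  have "norm (complexify B *v v) \<le> (\<Sum>i\<in>UNIV. norm ((complexify B *v v)$i))"
    by (rule norm_le_l1_cvec)
  also have "\<dots> \<le> (\<Sum>i\<in>UNIV. (\<Sum>j\<in>UNIV. \<bar>B$i$j\<bar>) * norm v)"
  proof (rule sum_mono)
    fix i
    have "norm ((complexify B *v v)$i) \<le> (\<Sum>j\<in>UNIV. norm (of_real (B$i$j) * v$j))"
      unfolding cmv_nth by (rule norm_sum)
    also have "\<dots> \<le> (\<Sum>j\<in>UNIV. \<bar>B$i$j\<bar> * norm v)"
      using Finite_Cartesian_Product.norm_nth_le[of v] by (intro sum_mono) (auto simp: norm_mult intro!: mult_left_mono)
    finally show "norm ((complexify B *v v)$i) \<le> (\<Sum>j\<in>UNIV. \<bar>B$i$j\<bar>) * norm v"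
      by (simp add: sum_distrib_right)
  qed
  also have "\<dots> = Nm B * norm v" by (simp add: Nm_def sum_distrib_right)
  finally show ?thesis .
qed

lemma norm_smult_c: "norm (c *s (v::complex^'n)) = cmod c * norm v"
  unfolding norm_vec_def by (simp add: norm_mult L2_set_right_distrib)

lemma Nm_nonneg: "0 \<le> Nm B" unfolding Nm_def by (auto intro!: sum_nonneg)

lemma detX_Re:
  fixes A :: "real^3^3" and w :: real
  defines "X \<equiv> (\<chi> i j. complex_of_real (A$i$j) - (if i = j then \<i> * complex_of_real w else 0)) :: complex^3^3"
  shows "Re (det X) = det A - w^2 * trace A"
  unfolding X_def det_3 trace_def sum_3
  by (simp add: algebra_simps power2_eq_square)

lemma noimag:
  fixes A :: "real^3^3" and w :: real
  assumes tr: "trace A = 0" and dt: "det A \<noteq> 0" and v: "v \<noteq> 0"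
  shows "complexify A *v v \<noteq> (\<i> * complex_of_real w) *s v"
proof
  assume eq: "complexify A *v v = (\<i> * complex_of_real w) *s v"
  define X where "X \<equiv> (\<chi> i j. complex_of_real (A$i$j) - (if i = j then \<i> * complex_of_real w else 0)) :: complex^3^3"
  have "X *v v = complexify A *v v - (\<i> * complex_of_real w) *s v"
  proof (unfold vec_eq_iff, intro allI)
    fix i
    have "(X *v v)$i = (\<Sum>j\<in>UNIV. complex_of_real (A$i$j) * v$j - (if i = j then \<i> * complex_of_real w else 0) * v$j)"
      by (simp add: X_def matrix_vector_mult_def left_diff_distrib)
    also have "\<dots> = (\<Sum>j\<in>UNIV. complex_of_real (A$i$j) * v$j) - (\<Sum>j\<in>UNIV. (if i = j then \<i> * complex_of_real w else 0) * v$j)"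
      by (simp add: sum_subtractf)
    also have "(\<Sum>j\<in>UNIV. (if i = j then \<i> * complex_of_real w else 0) * v$j) = \<i> * complex_of_real w * v$i"
    proof -
      have fe: "(\<lambda>j. (if i = j then \<i> * complex_of_real w else 0) * v$j) = (\<lambda>j. if i = j then \<i> * complex_of_real w * v$j else 0)"
        by auto
      then show ?thesis unfolding fe by (subst sum.delta') auto
    qed
    finally have "(X *v v)$i = (\<Sum>j\<in>UNIV. complex_of_real (A$i$j) * v$j) - \<i> * complex_of_real w * v$i" .
    also have "\<dots> = (complexify A *v v - (\<i> * complex_of_real w) *s v) $ i"
      by (simp add: cmv_nth)
    finally show "(X *v v)$i = (complexify A *v v - (\<i> * complex_of_real w) *s v) $ i" .
  qed
  with eq have Xv: "X *v v = 0" by simp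
  have "Re (det X) = det A" using detX_Re[of A w] tr by (simp add: X_def)
  then have "det X \<noteq> 0" using dt by auto
  then have "invertible X" by (simp add: invertible_det_nz)
  then have "\<exists>B. B ** X = mat 1" using invertible_left_inverse by blast
  then have "v = 0" using Xv matrix_left_invertible_ker by blast
  with v show False by simp
qed

lemma Lw_scale:
  "complexify A *v (r *\<^sub>R v) - c *s (r *\<^sub>R v) = r *\<^sub>R (complexify A *v v - c *s (v::complex^'n))"
  unfolding vec_eq_iff cmv_nth vector_scaleR_component vector_minus_component vector_smult_component
  by (simp add: scaleR_conv_of_real sum_distrib_left algebra_simps)

lemma Lw_eq:
  "complexify A *v v - c *s (v::complex^'n) = (\<chi> i. (\<Sum>j\<in>UNIV. of_real (A$i$j) * v$j) - c * v$i)"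
  unfolding vec_eq_iff by (simp add: cmv_nth)

lemma lower_bound:
  fixes A :: "real^3^3"
  assumes tr: "trace A = 0" and dt: "det A \<noteq> 0"
  shows "\<exists>m>0. \<forall>w v. \<bar>w\<bar> \<le> R \<longrightarrow> m * norm v \<le> norm (complexify A *v v - (\<i> * complex_of_real w) *s v)"
proof (cases "R < 0")
  case True then show ?thesis by (auto intro: exI[of _ 1])
next
  case False
  define S where "S = {-R..R} \<times> sphere (0::complex^3) 1"
  define g where "g = (\<lambda>p::real \<times> (complex^3). norm (\<chi> i. (\<Sum>j\<in>UNIV. of_real (A$i$j) * (snd p)$j) - (\<i> * complex_of_real (fst p)) * (snd p)$i))"
  have cS: "compact S" unfolding S_def by (intro compact_Times compact_Icc compact_sphere)
  have "sphere (0::complex^3) 1 \<noteq> {}" by simp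
  then have nS: "S \<noteq> {}" using False unfolding S_def by auto
  have gc: "continuous_on S g" unfolding g_def
    by (intro continuous_intros continuous_on_vec_lambda)
  obtain p0 where p0: "p0 \<in> S" "\<And>p. p \<in> S \<Longrightarrow> g p0 \<le> g p"
    using continuous_attains_inf[OF cS nS gc] by blast
  have gL: "g p = norm (complexify A *v snd p - (\<i> * complex_of_real (fst p)) *s snd p)" for p
    unfolding g_def Lw_eq ..
  have "g p0 \<noteq> 0"
  proof
    assume "g p0 = 0"
    then have "complexify A *v snd p0 = (\<i> * complex_of_real (fst p0)) *s snd p0"
      unfolding gL by simp
    moreover have "snd p0 \<noteq> 0" using p0(1) unfolding S_def by auto
    ultimately show False using noimag[OF tr dt] by blast
  qed
  then have m0: "g p0 > 0" unfolding g_def by simp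
  show ?thesis
  proof (intro exI[of _ "g p0"] conjI m0 allI impI)
    fix w v assume w: "\<bar>w\<bar> \<le> R"
    show "g p0 * norm v \<le> norm (complexify A *v v - (\<i> * complex_of_real w) *s v)"
    proof (cases "v = 0")
      case True then show ?thesis by simp
    next
      case False
      define u where "u = (1 / norm v) *\<^sub>R v"
      have "(w, u) \<in> S" using w False unfolding S_def u_def by auto
      then have "g p0 \<le> g (w, u)" by (rule p0(2))
      also have "g (w,u) = (1 / norm v) * norm (complexify A *v v - (\<i> * complex_of_real w) *s v)"
        unfolding gL u_def by (simp add: Lw_scale)
      finally show ?thesis using False by (simp add: field_simps)
    qed
  qed
qed

lemma cplx_add: "complexify (X + Y) *v v = complexify X *v v + complexify Y *v v"
  unfolding vec_eq_iff by (simp add: cmv_nth distrib_right sum.distrib)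

lemma cplx_scale: "complexify (T *\<^sub>R X) *v v = complex_of_real T *s (complexify X *v v)"
  unfolding vec_eq_iff by (simp add: cmv_nth sum_distrib_left algebra_simps)

lemma cplx_id: "complexify (mat 1) *v v = v"
proof -
  have "complexify (mat 1 :: real^'n^'n) = mat 1"
    unfolding vec_eq_iff complexify_def mat_def by simp
  then show ?thesis by (metis matrix_vector_mul_lid)
qed

lemma Nm_scale: "Nm (c *\<^sub>R B) = \<bar>c\<bar> * Nm B"
  unfolding Nm_def by (simp add: abs_mult sum_distrib_left)

lemma LA_main:
  fixes A :: "real^3^3"
  assumes tr: "trace A = 0" and dt: "det A \<noteq> 0"
  shows "\<exists>\<eta>>0. \<exists>T0>0. \<forall>T M. 0 < T \<longrightarrow> T < T0 \<longrightarrow> Nm (M - mat 1 - T *\<^sub>R A) \<le> \<eta> * T \<longrightarrow>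
            (\<forall>c. is_eigenvalue M c \<longrightarrow> cmod c \<noteq> 1)"
proof -
  define R where "R = Nm A + 1"
  have R0: "R \<ge> 1" unfolding R_def using Nm_nonneg[of A] by simp
  obtain m where m0: "m > 0" and mb: "\<And>w v. \<bar>w\<bar> \<le> R \<Longrightarrow> m * norm v \<le> norm (complexify A *v v - (\<i> * complex_of_real w) *s v)"
    using lower_bound[OF tr dt, of R] by blast
  define \<eta> where "\<eta> = min 1 (m/4)"
  define T0 where "T0 = m / (R^2 + 1)"
  have \<eta>0: "\<eta> > 0" using m0 unfolding \<eta>_def by simp
  have T00: "T0 > 0" using m0 unfolding T0_def by (auto intro!: divide_pos_pos add_nonneg_pos)
  show ?thesis
  proof (rule exI[of _ \<eta>], intro conjI \<eta>0, rule exI[of _ T0], intro conjI T00 allI impI)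
    fix T M c
    assume T: "0 < T" "T < T0" and NM: "Nm (M - mat 1 - T *\<^sub>R A) \<le> \<eta> * T"
      and ev: "is_eigenvalue M c"
    show "cmod c \<noteq> 1"
    proof
    assume c1: "cmod c = 1"
    obtain v where v0: "v \<noteq> 0" and Mv: "complexify M *v v = c *s v"
      using ev unfolding is_eigenvalue_def by blast
    define E where "E = (1/T) *\<^sub>R (M - mat 1 - T *\<^sub>R A)"
    have NE: "Nm E \<le> \<eta>" using NM T unfolding E_def Nm_scale by (simp add: field_simps)
    have ME: "M = mat 1 + T *\<^sub>R A + T *\<^sub>R E" using T unfolding E_def by (simp add: algebra_simps)
    define w where "w = complexify A *v v"
    define e where "e = complexify E *v v"
    define \<nu> where "\<nu> = (c - 1) / complex_of_real T"
    have cnu: "c = 1 + complex_of_real T * \<nu>" using T unfolding \<nu>_def by (simp add: field_simps)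
    have eqv: "c *s v = v + complex_of_real T *s w + complex_of_real T *s e"
      using Mv unfolding ME cplx_add cplx_scale cplx_id w_def e_def by simp
    have nv: "\<nu> *s v = w + e"
    proof (unfold vec_eq_iff, intro allI)
      fix i
      have "c * v$i = v$i + complex_of_real T * w$i + complex_of_real T * e$i"
        using eqv unfolding vec_eq_iff by simp
      then have "complex_of_real T * (\<nu> * v$i) = complex_of_real T * (w$i + e$i)"
        unfolding cnu by (simp add: algebra_simps)
      then show "(\<nu> *s v)$i = (w + e)$i" using T by simp
    qed
    have nvpos: "norm v > 0" using v0 by simp
    have "cmod \<nu> * norm v \<le> (Nm A + Nm E) * norm v"
    proof -
      have "cmod \<nu> * norm v = norm (w + e)" using nv norm_smult_c by metis
      also have "\<dots> \<le> norm w + norm e" by (rule norm_triangle_ineq)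
      also have "\<dots> \<le> Nm A * norm v + Nm E * norm v" unfolding w_def e_def
        by (intro add_mono norm_cmv)
      finally show ?thesis by (simp add: algebra_simps)
    qed
    then have "cmod \<nu> \<le> Nm A + Nm E" using nvpos by simp
    then have nuR: "cmod \<nu> \<le> R" using NE unfolding R_def \<eta>_def by simp
    define \<delta> where "\<delta> = Re \<nu>"
    define \<omega> where "\<omega> = Im \<nu>"
    have om: "\<bar>\<omega>\<bar> \<le> R" using abs_Im_le_cmod[of \<nu>] nuR unfolding \<omega>_def by simp
    have "1 = (cmod c)^2" using c1 by simp
    also have "\<dots> = (1 + T * \<delta>)^2 + (T * \<omega>)^2"
      unfolding cnu cmod_power2 \<delta>_def \<omega>_def by simp
    finally have "T * (2 * \<delta> + T * (\<delta>^2 + \<omega>^2)) = 0" by (simp add: algebra_simps power2_eq_square)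
    then have "2 * \<delta> + T * (\<delta>^2 + \<omega>^2) = 0" using T by simp
    then have "2 * \<delta> = - T * (cmod \<nu>)^2" using T unfolding cmod_power2 \<delta>_def \<omega>_def by (simp add: algebra_simps)
    moreover have "(cmod \<nu>)^2 \<le> R^2" using nuR by (simp add: power_mono)
    ultimately have "\<bar>2 * \<delta>\<bar> \<le> T * R^2" using T
      by (simp add: abs_mult mult_left_mono)
    then have "\<bar>\<delta>\<bar> \<le> T * R^2 / 2" by simp
    also have "\<dots> < m / 2"
    proof -
      have "T * R^2 \<le> T0 * R^2" using T by (simp add: mult_right_mono)
      also have "\<dots> < m"
      proof -
        have "m * R^2 < m * (R^2 + 1)" using m0 by simp
        moreover have p: "R^2 + 1 > 0" by (metis add_pos_nonneg zero_less_one zero_le_power2 add.commute)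
        ultimately show ?thesis unfolding T0_def by (simp add: pos_divide_less_eq)
      qed
      finally show ?thesis by simp
    qed
    finally have dl: "\<bar>\<delta>\<bar> < m / 2" .
    have nus: "\<nu> = complex_of_real \<delta> + \<i> * complex_of_real \<omega>"
      unfolding \<delta>_def \<omega>_def by (simp add: complex_eq_iff)
    have key: "w - (\<i> * complex_of_real \<omega>) *s v = complex_of_real \<delta> *s v - e"
    proof (unfold vec_eq_iff, intro allI)
      fix i
      have "\<nu> * v$i = w$i + e$i" using nv unfolding vec_eq_iff by simp
      then show "(w - (\<i> * complex_of_real \<omega>) *s v)$i = (complex_of_real \<delta> *s v - e)$i"
        unfolding nus by (simp add: algebra_simps)
    qed
    have "m * norm v \<le> norm (w - (\<i> * complex_of_real \<omega>) *s v)"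
      unfolding w_def by (rule mb[OF om])
    also have "\<dots> \<le> norm (complex_of_real \<delta> *s v) + norm e" unfolding key by (rule norm_triangle_ineq4)
    also have "\<dots> \<le> \<bar>\<delta>\<bar> * norm v + Nm E * norm v"
      unfolding norm_smult_c e_def by (intro add_mono norm_cmv) simp
    finally have "m * norm v \<le> (\<bar>\<delta>\<bar> + Nm E) * norm v" by (simp add: algebra_simps)
    then have "m \<le> \<bar>\<delta>\<bar> + Nm E" using nvpos by simp
    moreover have "Nm E \<le> m/4" using NE unfolding \<eta>_def by simp
    ultimately show False using dl m0 by simp
    qed
  qed
qed



definition emb :: "'a::real_normed_vector \<Rightarrow>\<^sub>L (real \<times> 'a)" where
  "emb = Blinfun (\<lambda>v. (0, v))"

lemma bl_emb: "bounded_linear (\<lambda>v::'a::real_normed_vector. (0::real, v))"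
  by (intro bounded_linear_Pair bounded_linear_zero bounded_linear_ident)

lemma emb_apply[simp]: "blinfun_apply emb v = (0, v)"
  unfolding emb_def by (simp add: bounded_linear_Blinfun_apply[OF bl_emb])

lemma norm_emb: "norm (emb :: 'a::real_normed_vector \<Rightarrow>\<^sub>L (real \<times> 'a)) \<le> 1"
  by (rule norm_blinfun_bound) (auto simp: norm_Pair)

lemma norm_comp_emb: "norm (G o\<^sub>L emb) \<le> norm G"
proof -
  have "norm (G o\<^sub>L emb) \<le> norm G * norm (emb :: 'a::real_normed_vector \<Rightarrow>\<^sub>L (real \<times> 'a))"
    by (rule norm_blinfun_compose)
  also have "\<dots> \<le> norm G" using norm_emb[where 'a='a] by (simp add: mult_left_le)
  finally show ?thesis .
qed

lemma vd_cont:
  assumes "\<And>t. t \<in> S \<Longrightarrow> (g has_vector_derivative g' t) (at t within S)"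
  shows "continuous_on S g"
  using assms has_vector_derivative_continuous continuous_on_eq_continuous_within by blast

lemma mvt_curve:
  fixes g :: "real \<Rightarrow> 'b::banach"
  assumes ab: "a \<le> b"
    and d: "\<And>t. t \<in> {a..b} \<Longrightarrow> (g has_vector_derivative g' t) (at t within {a..b})"
    and B: "\<And>t. t \<in> {a..b} \<Longrightarrow> norm (g' t) \<le> B"
  shows "norm (g b - g a) \<le> B * (b - a)"
proof -
  have i: "(g' has_integral (g b - g a)) {a..b}"
    by (rule fundamental_theorem_of_calculus[OF ab d])
  have "0 \<le> B" using B[of a] ab by (auto intro: order_trans[OF norm_ge_zero])
  from has_integral_bound_real[OF this finite.emptyI i] B
  show ?thesis using ab by simp
qed

lemma partial_deriv:
  assumes "((\<lambda>(t, y). f t y) has_derivative blinfun_apply G) (at (t, y))"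
  shows "(f t has_derivative blinfun_apply (G o\<^sub>L emb)) (at y)"
proof -
  have p: "((\<lambda>y. (t, y)) has_derivative (\<lambda>v. (0, v))) (at y)"
    by (auto intro!: derivative_eq_intros)
  have "((\<lambda>(t, y). f t y) \<circ> (\<lambda>y. (t, y)) has_derivative blinfun_apply G \<circ> (\<lambda>v. (0, v))) (at y)"
    by (rule diff_chain_at[OF p]) (use assms in simp)
  moreover have "(\<lambda>(t, y). f t y) \<circ> (\<lambda>y. (t, y)) = f t" by auto
  moreover have "blinfun_apply G \<circ> (\<lambda>v. (0, v)) = blinfun_apply (G o\<^sub>L emb)" by auto
  ultimately show ?thesis by simp
qed



lemma clamp_real_in: "(a::real) \<le> b \<Longrightarrow> clamp a b t \<in> {a..b}"
  using clamp_in_interval[of a b t] by simp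

lemma clamp_real_cancel: "t \<in> {a..b} \<Longrightarrow> clamp a b t = (t::real)"
  using clamp_cancel_cbox[of t a b] by simp

lemma lin_ode:
  fixes A :: "real \<Rightarrow> ('a::euclidean_space \<Rightarrow>\<^sub>L 'a)"
  assumes ab: "a \<le> b" and Ac: "continuous_on {a..b} A"
    and AL: "\<And>s. s \<in> {a..b} \<Longrightarrow> norm (A s) \<le> L" and L0: "0 \<le> L" and L1: "L * (b - a) < 1"
  shows "\<exists>Y. continuous_on {a..b} Y \<and> (\<forall>t\<in>{a..b}. Y t = id_blinfun + integral {a..t} (\<lambda>s. A s o\<^sub>L Y s))"
proof -
  define G where "G Z u = id_blinfun + integral {a..u} (\<lambda>s. A s o\<^sub>L apply_bcontfun Z s)"
    for Z :: "real \<Rightarrow>\<^sub>C ('a \<Rightarrow>\<^sub>L 'a)" and u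
  have ic: "continuous_on {a..b} (\<lambda>s. A s o\<^sub>L apply_bcontfun Z s)" for Z :: "real \<Rightarrow>\<^sub>C ('a \<Rightarrow>\<^sub>L 'a)"
    by (intro continuous_intros Ac) auto
  have Gc: "continuous_on {a..b} (G Z)" for Z
    unfolding G_def
    by (intro continuous_intros indefinite_integral_continuous_1 integrable_continuous_interval ic)
  have ex: "\<exists>g. \<forall>t. apply_bcontfun g t = G Z (clamp a b t)" for Z
  proof -
    have "continuous_on (cbox a b) (G Z)" using Gc[of Z] by simp
    from continuous_on_cbox_bcontfunE[OF this] obtain g :: "real \<Rightarrow>\<^sub>C ('a \<Rightarrow>\<^sub>L 'a)"
      where "\<And>t. apply_bcontfun g t = G Z (clamp a b t)" by metis
    then show ?thesis by blast
  qed
  define \<Phi> where "\<Phi> Z = (SOME g. \<forall>t. apply_bcontfun g t = G Z (clamp a b t))" for Z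
  have \<Phi>: "apply_bcontfun (\<Phi> Z) t = G Z (clamp a b t)" for Z t
    unfolding \<Phi>_def using someI_ex[OF ex[of Z]] by blast
  have contr: "dist (\<Phi> Z1) (\<Phi> Z2) \<le> (L * (b - a)) * dist Z1 Z2" for Z1 Z2
  proof (rule dist_bound)
    fix t
    define c where "c = clamp a b t"
    have c: "c \<in> {a..b}" unfolding c_def using ab by (rule clamp_real_in)
    have sub: "{a..c} \<subseteq> {a..b}" using c by auto
    have i1: "(\<lambda>s. A s o\<^sub>L apply_bcontfun Z s) integrable_on {a..c}" for Z :: "real \<Rightarrow>\<^sub>C ('a \<Rightarrow>\<^sub>L 'a)"
      using continuous_on_subset[OF ic sub] by (rule integrable_continuous_interval)
    have "dist (\<Phi> Z1 t) (\<Phi> Z2 t) = norm (integral {a..c} (\<lambda>s. A s o\<^sub>L apply_bcontfun Z1 s) - integral {a..c} (\<lambda>s. A s o\<^sub>L apply_bcontfun Z2 s))"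
      unfolding \<Phi> c_def[symmetric] G_def by (simp add: dist_norm)
    also have "\<dots> = norm (integral {a..c} (\<lambda>s. (A s o\<^sub>L apply_bcontfun Z1 s) - (A s o\<^sub>L apply_bcontfun Z2 s)))"
      using integral_diff[OF i1[of Z1] i1[of Z2]] by simp
    also have "\<dots> \<le> (L * dist Z1 Z2) * (c - a)"
    proof (rule integral_bound)
      show "a \<le> c" using c by simp
      show "continuous_on {a..c} (\<lambda>s. (A s o\<^sub>L apply_bcontfun Z1 s) - (A s o\<^sub>L apply_bcontfun Z2 s))"
        by (intro continuous_intros continuous_on_subset[OF ic sub])
      fix s assume s: "s \<in> {a..c}"
      have "(A s o\<^sub>L apply_bcontfun Z1 s) - (A s o\<^sub>L apply_bcontfun Z2 s) = A s o\<^sub>L (apply_bcontfun Z1 s - apply_bcontfun Z2 s)"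
        by (rule blinfun_eqI) (simp add: blinfun.diff_right blinfun.diff_left)
      also have "norm \<dots> \<le> norm (A s) * norm (apply_bcontfun Z1 s - apply_bcontfun Z2 s)"
        by (rule norm_blinfun_compose)
      also have "\<dots> \<le> L * dist Z1 Z2"
        using AL[of s] s sub dist_bounded[of Z1 s Z2] L0
        by (intro mult_mono) (auto simp: dist_norm)
      finally show "norm ((A s o\<^sub>L apply_bcontfun Z1 s) - (A s o\<^sub>L apply_bcontfun Z2 s)) \<le> L * dist Z1 Z2" .
    qed
    also have "\<dots> \<le> (L * dist Z1 Z2) * (b - a)"
      using c L0 by (intro mult_left_mono) auto
    finally show "dist (\<Phi> Z1 t) (\<Phi> Z2 t) \<le> (L * (b - a)) * dist Z1 Z2" by (simp add: algebra_simps)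
  qed
  have "\<exists>!Y. \<Phi> Y = Y"
    by (rule banach_fix_type[of "L * (b - a)"]) (use L0 ab L1 contr in auto)
  then obtain Y0 where Y0: "\<Phi> Y0 = Y0" by blast
  show ?thesis
  proof (intro exI[of _ "apply_bcontfun Y0"] conjI ballI)
    show "continuous_on {a..b} (apply_bcontfun Y0)" by simp
    fix t assume t: "t \<in> {a..b}"
    have "apply_bcontfun Y0 t = apply_bcontfun (\<Phi> Y0) t" using Y0 by simp
    also have "\<dots> = G Y0 t" unfolding \<Phi> using clamp_real_cancel[OF t] by simp
    finally show "apply_bcontfun Y0 t = id_blinfun + integral {a..t} (\<lambda>s. A s o\<^sub>L apply_bcontfun Y0 s)"
      unfolding G_def .
  qed
qed



lemma sup_absorb:
  fixes e :: "real \<Rightarrow> 'b::real_normed_vector"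
  assumes ab: "a \<le> b" and ec: "continuous_on {a..b} e"
    and H: "\<And>E t. (\<And>s. s \<in> {a..b} \<Longrightarrow> norm (e s) \<le> E) \<Longrightarrow> t \<in> {a..b} \<Longrightarrow> norm (e t) \<le> c + E/2"
    and t: "t \<in> {a..b}"
  shows "norm (e t) \<le> 2 * c"
proof -
  have "continuous_on {a..b} (\<lambda>s. norm (e s))" by (intro continuous_intros ec)
  then obtain tm where tm: "tm \<in> {a..b}" "\<And>s. s \<in> {a..b} \<Longrightarrow> norm (e s) \<le> norm (e tm)"
    using continuous_attains_sup[of "{a..b}" "\<lambda>s. norm (e s)"] ab by auto
  have "norm (e tm) \<le> c + norm (e tm) / 2" by (rule H[OF tm(2) tm(1)])
  then have "norm (e tm) \<le> 2 * c" by simp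
  with tm(2)[OF t] show ?thesis by simp
qed

lemma confine:
  fixes g :: "real \<Rightarrow> 'b::banach"
  assumes ab: "a \<le> b"
    and d: "\<And>t. t \<in> {a..b} \<Longrightarrow> (g has_vector_derivative g' t) (at t within {a..b})"
    and B: "\<And>t. t \<in> {a..b} \<Longrightarrow> dist (g t) (g a) \<le> r \<Longrightarrow> norm (g' t) \<le> M"
    and r0: "0 < r" and r: "M * (b - a) < r"
    and t: "t \<in> {a..b}"
  shows "dist (g t) (g a) < r"
proof (rule ccontr)
  assume nt: "\<not> dist (g t) (g a) < r"
  define S where "S = {t \<in> {a..b}. (\<lambda>_. r) t \<le> dist (g t) (g a)}"
  have gc: "continuous_on {a..b} g" using d by (rule vd_cont)
  have cS: "closed S" unfolding S_def
    by (intro continuous_on_closed_Collect_le continuous_intros gc closed_atLeastAtMost)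
  have nS: "S \<noteq> {}" using nt t unfolding S_def by auto
  have bS: "bdd_below S" unfolding S_def by (auto intro: bdd_belowI[of _ a])
  define s where "s = Inf S"
  have sS: "s \<in> S" unfolding s_def by (rule closed_contains_Inf[OF nS bS cS])
  then have s: "s \<in> {a..b}" "r \<le> dist (g s) (g a)" unfolding S_def by auto
  have "s \<noteq> a" using s r0 by auto
  then have as: "a < s" using s by auto
  have lt: "dist (g u) (g a) < r" if u: "u \<in> {a..<s}" for u
  proof (rule ccontr)
    assume "\<not> dist (g u) (g a) < r"
    then have "u \<in> S" using u s unfolding S_def by auto
    then have "s \<le> u" unfolding s_def by (rule cInf_lower[OF _ bS])
    with u show False by auto
  qed
  define Q where "Q = {u \<in> {a..s}. dist (g u) (g a) \<le> (\<lambda>_. r) u}"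
  have cQ: "closed Q" unfolding Q_def
    by (intro continuous_on_closed_Collect_le continuous_intros continuous_on_subset[OF gc]) (use s in auto)
  have "{a..<s} \<subseteq> Q" unfolding Q_def using lt by (auto intro: less_imp_le)
  then have "closure {a..<s} \<subseteq> Q" using cQ by (rule closure_minimal)
  then have inQ: "{a..s} \<subseteq> Q" using closure_atLeastLessThan[OF as] by simp
  have M0: "0 \<le> M" using B[of a] ab r0 by (auto intro: order_trans[OF norm_ge_zero])
  have "norm (g s - g a) \<le> M * (s - a)"
  proof (rule mvt_curve)
    show "a \<le> s" using as by simp
    fix u assume u: "u \<in> {a..s}"
    then have ub: "u \<in> {a..b}" using s by auto
    show "(g has_vector_derivative g' u) (at u within {a..s})"
      using d[OF ub] by (rule has_vector_derivative_within_subset) (use s in auto)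
    show "norm (g' u) \<le> M" using B[OF ub] inQ u unfolding Q_def by auto
  qed
  also have "\<dots> \<le> M * (b - a)" using s M0 by (intro mult_left_mono) auto
  finally have "dist (g s) (g a) < r" using r by (simp add: dist_norm)
  with s show False by simp
qed

lemma lip_curve:
  fixes w :: "real \<Rightarrow> 'b::banach"
  assumes ab: "a \<le> b"
    and d: "\<And>t. t \<in> {a..b} \<Longrightarrow> (w has_vector_derivative w' t) (at t within {a..b})"
    and B: "\<And>t. t \<in> {a..b} \<Longrightarrow> norm (w' t) \<le> L * norm (w t)"
    and L0: "0 \<le> L" and L1: "L * (b - a) \<le> 1/2"
    and t: "t \<in> {a..b}"
  shows "norm (w t) \<le> 2 * norm (w a)"
proof (rule sup_absorb[OF ab vd_cont[OF d] _ t])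
  fix E u assume E: "\<And>s. s \<in> {a..b} \<Longrightarrow> norm (w s) \<le> E" and u: "u \<in> {a..b}"
  have E0: "0 \<le> E" using E[of a] ab by (auto intro: order_trans[OF norm_ge_zero])
  have "norm (w u - w a) \<le> (L * E) * (u - a)"
  proof (rule mvt_curve)
    show "a \<le> u" using u by simp
    fix v assume v: "v \<in> {a..u}"
    then have vb: "v \<in> {a..b}" using u by auto
    show "(w has_vector_derivative w' v) (at v within {a..u})"
      using d[OF vb] by (rule has_vector_derivative_within_subset) (use u in auto)
    show "norm (w' v) \<le> L * E" using B[OF vb] E[OF vb] L0 by (meson mult_left_mono order_trans)
  qed
  also have "\<dots> \<le> (L * E) * (b - a)" using u L0 E0 by (intro mult_left_mono) auto
  also have "\<dots> = (L * (b - a)) * E" by simp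
  also have "\<dots> \<le> (1/2) * E" using L1 E0 by (rule mult_right_mono)
  finally have "norm (w u - w a) \<le> E / 2" by simp
  then show "norm (w u) \<le> norm (w a) + E / 2" by (metis norm_triangle_sub order_trans add_le_cancel_left)
qed



lemma AN:
  fixes f :: "real \<Rightarrow> real^'n \<Rightarrow> real^'n" and \<phi> :: "real \<Rightarrow> real \<Rightarrow> real^'n \<Rightarrow> real^'n"
    and F' :: "real \<times> (real^'n) \<Rightarrow> ((real \<times> (real^'n)) \<Rightarrow>\<^sub>L (real^'n))"
  assumes Dopen: "open D" and F'c: "continuous_on D F'"
    and F'd: "\<And>z. z \<in> D \<Longrightarrow> ((\<lambda>(t, y). f t y) has_derivative blinfun_apply (F' z)) (at z)"
    and base: "(t0, x) \<in> D" and U: "open U" "x \<in> U" and eps: "\<epsilon> > 0"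
    and flow: "\<forall>y\<in>U. \<phi> t0 t0 y = y \<and>
        (\<forall>t\<in>{t0..t0+\<epsilon>}. (t, \<phi> t t0 y) \<in> D \<and>
           ((\<lambda>s. \<phi> s t0 y) has_vector_derivative f t (\<phi> t t0 y)) (at t within {t0..t0+\<epsilon>}))"
    and \<eta>: "\<eta> > 0"
  shows "\<exists>T1>0. \<forall>T. 0 < T \<and> T < T1 \<longrightarrow> (\<exists>Lb. (time_map \<phi> t0 T has_derivative blinfun_apply Lb) (at x)
            \<and> norm (Lb - id_blinfun - T *\<^sub>R (F' (t0, x) o\<^sub>L emb)) \<le> \<eta> * T)"
proof -
  define P where "P z = F' z o\<^sub>L emb" for z
  have Fc: "continuous_on D (\<lambda>(t, y). f t y)"
    by (rule continuous_at_imp_continuous_on) (use F'd has_derivative_continuous in blast)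
  have Pc: "continuous_on D P" unfolding P_def by (intro continuous_intros F'c)
  have Pd: "(f t has_derivative blinfun_apply (P (t, y))) (at y)" if "(t, y) \<in> D" for t y
    unfolding P_def by (rule partial_deriv[OF F'd[OF that]])
  obtain \<rho> where \<rho>: "\<rho> > 0" "cball (t0, x) \<rho> \<subseteq> D" using open_contains_cball Dopen base by blast
  define K where "K = cball (t0, x) \<rho>"
  have cK: "compact K" unfolding K_def by simp
  have KD: "K \<subseteq> D" unfolding K_def using \<rho> by simp
  obtain rU where rU: "rU > 0" "ball x rU \<subseteq> U" using open_contains_ball U by blast
  define r where "r = min (\<rho>/4) (rU/2)"
  have r0: "r > 0" unfolding r_def using \<rho> rU by simp
  have inK: "(t, y) \<in> K" if "\<bar>t - t0\<bar> \<le> 2*r" "dist x y \<le> 2*r" for t y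
  proof -
    have "dist (t0, x) (t, y) = sqrt ((dist t0 t)\<^sup>2 + (dist x y)\<^sup>2)" by (rule dist_Pair_Pair)
    also have "\<dots> \<le> \<bar>dist t0 t\<bar> + \<bar>dist x y\<bar>" by (rule sqrt_sum_squares_le_sum_abs)
    also have "\<dots> \<le> 4 * r" using that by (simp add: dist_real_def abs_minus_commute)
    also have "\<dots> \<le> \<rho>" unfolding r_def by simp
    finally show ?thesis unfolding K_def by simp
  qed
  have inU: "y \<in> U" if "y \<in> cball x r" for y
    using that rU r0 unfolding r_def by (auto simp: subset_eq)
  have "bounded ((\<lambda>(t, y). f t y) ` K)"
    by (intro compact_imp_bounded compact_continuous_image continuous_on_subset[OF Fc KD] cK)
  then obtain Mf where Mf: "Mf > 0" "\<forall>z\<in>(\<lambda>(t, y). f t y) ` K. norm z \<le> Mf"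
    unfolding bounded_pos by blast
  have Mf': "norm (f t y) \<le> Mf" if "(t, y) \<in> K" for t y using Mf(2) that by force
  have "bounded (F' ` K)"
    by (intro compact_imp_bounded compact_continuous_image continuous_on_subset[OF F'c KD] cK)
  then obtain L where L0: "L > 0" "\<forall>z\<in>F' ` K. norm z \<le> L"
    unfolding bounded_pos by blast
  have L: "L > 0" "\<And>z. z \<in> K \<Longrightarrow> norm (F' z) \<le> L" using L0 by auto
  have PL: "norm (P z) \<le> L" if "z \<in> K" for z
    unfolding P_def using norm_comp_emb L(2)[OF that] by (rule order_trans)
  have ucF': "uniformly_continuous_on K F'"
    by (intro compact_uniformly_continuous continuous_on_subset[OF F'c KD] cK)
  have lin: "\<exists>\<delta>>0. \<forall>t a b. \<bar>t - t0\<bar> \<le> 2*r \<longrightarrow> a \<in> cball x (2*r) \<longrightarrow> b \<in> cball x (2*r) \<longrightarrow> norm (a - b) < \<delta> \<longrightarrow>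
      norm (f t a - f t b - P (t, b) (a - b)) \<le> e * norm (a - b)" if e: "e > 0" for e
  proof -
    obtain \<delta> where \<delta>: "\<delta> > 0" "\<And>z z'. z \<in> K \<Longrightarrow> z' \<in> K \<Longrightarrow> dist z' z < \<delta> \<Longrightarrow> dist (F' z') (F' z) < e"
      using ucF' e unfolding uniformly_continuous_on_def by metis
    show ?thesis
    proof (intro exI[of _ \<delta>] conjI \<delta>(1) allI impI)
      fix t a b assume t: "\<bar>t - t0\<bar> \<le> 2*r" and a: "a \<in> cball x (2*r)" and b: "b \<in> cball x (2*r)"
        and ab: "norm (a - b) < \<delta>"
      define S where "S = cball x (2*r) \<inter> ball b \<delta>"
      have cvS: "convex S" unfolding S_def by (intro convex_Int convex_cball convex_ball)
      have bS: "b \<in> S" unfolding S_def using b \<delta> by simp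
      have aS: "a \<in> S" unfolding S_def using a ab by (simp add: dist_norm norm_minus_commute)
      have "norm (f t a - f t b - blinfun_apply (P (t, b)) (a - b)) \<le> norm (a - b) * e"
      proof (rule differentiable_bound_linearization[of b a S "f t" "\<lambda>z. blinfun_apply (P (t, z))" b e])
        fix u :: real assume "u \<in> {0..1}"
        then have "(1 - u) *\<^sub>R b + u *\<^sub>R a \<in> S" using convexD_alt[OF cvS bS aS] by auto
        then show "b + u *\<^sub>R (a - b) \<in> S" by (simp add: algebra_simps)
      next
        fix z assume z: "z \<in> S"
        then have "(t, z) \<in> K" using t unfolding S_def by (intro inK) auto
        then show "(f t has_derivative blinfun_apply (P (t, z))) (at z within S)"
          using Pd KD by (auto intro: has_derivative_at_withinI)
      next
        fix z assume z: "z \<in> S"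
        have zK: "(t, z) \<in> K" using z t unfolding S_def by (intro inK) auto
        have bK: "(t, b) \<in> K" using b t by (intro inK) auto
        have eq: "(\<lambda>h. blinfun_apply (P (t, z)) h - blinfun_apply (P (t, b)) h) = blinfun_apply ((F' (t, z) - F' (t, b)) o\<^sub>L emb)"
          unfolding P_def by (auto simp: blinfun.diff_left)
        have "onorm (\<lambda>h. blinfun_apply (P (t, z)) h - blinfun_apply (P (t, b)) h) = norm ((F' (t, z) - F' (t, b)) o\<^sub>L emb)"
          unfolding eq by (simp add: norm_blinfun.rep_eq)
        also have "\<dots> \<le> norm (F' (t, z) - F' (t, b))" by (rule norm_comp_emb)
        also have "\<dots> < e"
        proof -
          have "dist (t, z) (t, b) < \<delta>" using z unfolding S_def by (simp add: dist_Pair_Pair dist_commute)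
          from \<delta>(2)[OF bK zK this] show ?thesis by (simp add: dist_norm)
        qed
        finally have "onorm (\<lambda>h. blinfun_apply (P (t, z)) h - blinfun_apply (P (t, b)) h) \<le> e" by simp
        then show "onorm (blinfun_apply (P (t, z)) - blinfun_apply (P (t, b))) \<le> e" by (simp add: fun_diff_def)
      next
        show "b \<in> S" by (rule bS)
      qed
      then show "norm (f t a - f t b - P (t, b) (a - b)) \<le> e * norm (a - b)" by (simp add: mult.commute)
    qed
  qed
  have lipF: "norm (f t a - f t b) \<le> L * norm (a - b)"
    if t: "\<bar>t - t0\<bar> \<le> 2*r" and a: "a \<in> cball x (2*r)" and b: "b \<in> cball x (2*r)" for t a b
  proof (rule differentiable_bound[OF convex_cball _ _ a b])
    fix z assume z: "z \<in> cball x (2*r)"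
    then have "(t, z) \<in> K" using t by (intro inK) auto
    then show "(f t has_derivative blinfun_apply (P (t, z))) (at z within cball x (2*r))"
      using Pd KD by (auto intro: has_derivative_at_withinI)
    show "onorm (blinfun_apply (P (t, z))) \<le> L"
      using PL[OF \<open>(t, z) \<in> K\<close>] by (simp add: norm_blinfun.rep_eq)
  qed
  have trajc: "continuous_on {t0..t0+\<epsilon>} (\<lambda>s. \<phi> s t0 y)" if "y \<in> U" for y
    by (rule vd_cont) (use flow that in blast)
  have trajD: "(s, \<phi> s t0 y) \<in> D" if "y \<in> U" "s \<in> {t0..t0+\<epsilon>}" for y s
    using flow that by blast
  have fc: "continuous_on {t0..t0+\<epsilon>} (\<lambda>s. f s (\<phi> s t0 y))" if y: "y \<in> U" for y
  proof -
    have c1: "continuous_on {t0..t0+\<epsilon>} (\<lambda>s. (s, \<phi> s t0 y))" by (intro continuous_intros trajc y)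
    have "(\<lambda>s. (s, \<phi> s t0 y)) ` {t0..t0+\<epsilon>} \<subseteq> D" using trajD[OF y] by auto
    from continuous_on_compose2[OF Fc c1 this] show ?thesis by simp
  qed
  define A where "A s = P (s, \<phi> s t0 x)" for s
  have Ac: "continuous_on {t0..t0+\<epsilon>} A"
  proof -
    have c1: "continuous_on {t0..t0+\<epsilon>} (\<lambda>s. (s, \<phi> s t0 x))" by (intro continuous_intros trajc U)
    have "(\<lambda>s. (s, \<phi> s t0 x)) ` {t0..t0+\<epsilon>} \<subseteq> D" using trajD[OF U(2)] by auto
    from continuous_on_compose2[OF Pc c1 this] show ?thesis unfolding A_def by simp
  qed
  have A0: "A t0 = P (t0, x)" unfolding A_def using flow U by simp
  obtain dA where dA: "dA > 0" "\<And>s. s \<in> {t0..t0+\<epsilon>} \<Longrightarrow> dist s t0 < dA \<Longrightarrow> dist (A s) (A t0) < \<eta>/4"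
  proof -
    have "t0 \<in> {t0..t0+\<epsilon>}" using eps by simp
    with Ac \<eta> show ?thesis unfolding continuous_on_iff
      by (metis that zero_less_divide_iff zero_less_numeral)
  qed
  define T1 where "T1 = min (min \<epsilon> (2*r)) (min (r / (2*Mf)) (min (1/(2*L)) (min dA (\<eta>/(8*L^2+1)))))"
  have T1pos: "T1 > 0" unfolding T1_def using eps r0 Mf L dA \<eta>
    by (auto intro!: divide_pos_pos add_nonneg_pos)
  show ?thesis
  proof (intro exI[of _ T1] conjI T1pos allI impI, elim conjE)
    fix T assume T0: "0 < T" and TT1: "T < T1"
    define b where "b = t0 + T"
    have Te: "T \<le> \<epsilon>" "T \<le> 2*r" using TT1 unfolding T1_def by auto
    have TMf: "Mf * T < r"
    proof -
      have "T < r / (2*Mf)" using TT1 unfolding T1_def by auto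
      then have "T * (2*Mf) < r" using Mf by (simp add: pos_less_divide_eq)
      moreover have "T * (2*Mf) = 2 * (Mf * T)" by simp
      moreover have "0 < Mf * T" using Mf T0 by simp
      ultimately show ?thesis by linarith
    qed
    have TL: "L * T \<le> 1/2"
    proof -
      have "T < 1 / (2*L)" using TT1 unfolding T1_def by auto
      then have "T * (2*L) < 1" using L by (simp add: pos_less_divide_eq)
      then show ?thesis by (simp add: algebra_simps)
    qed
    have TdA: "T < dA" using TT1 unfolding T1_def by auto
    have TL2: "2 * L^2 * T \<le> \<eta>/4"
    proof -
      have p: "8*L^2+1 > 0" by (simp add: add_nonneg_pos)
      have "T < \<eta>/(8*L^2+1)" using TT1 unfolding T1_def by auto
      then have "T * (8*L^2+1) < \<eta>" using p by (simp add: pos_less_divide_eq)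
      then show ?thesis using T0 by (simp add: algebra_simps)
    qed
    have bsub: "{t0..b} \<subseteq> {t0..t0+\<epsilon>}" unfolding b_def using Te by auto
    have tb: "t0 \<le> b" unfolding b_def using T0 by simp
    have trange: "\<bar>t - t0\<bar> \<le> 2*r" if "t \<in> {t0..b}" for t using that Te unfolding b_def by auto
    have dvy: "((\<lambda>s. \<phi> s t0 y) has_vector_derivative f t (\<phi> t t0 y)) (at t within {t0..c})"
      if "y \<in> U" "t \<in> {t0..c}" "c \<le> b" for y t c
    proof -
      have "t \<in> {t0..t0+\<epsilon>}" using that bsub by auto
      then have "((\<lambda>s. \<phi> s t0 y) has_vector_derivative f t (\<phi> t t0 y)) (at t within {t0..t0+\<epsilon>})"
        using flow that(1) by blast
      then show ?thesis by (rule has_vector_derivative_within_subset) (use that bsub in auto)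
    qed
    have conf: "\<phi> t t0 y \<in> cball x (2*r)" if y: "y \<in> cball x r" and t: "t \<in> {t0..b}" for y t
    proof -
      have yU: "y \<in> U" using inU y .
      have "dist (\<phi> t t0 y) (\<phi> t0 t0 y) < r"
      proof (rule confine[OF tb _ _ r0 _ t, where g'="\<lambda>s. f s (\<phi> s t0 y)" and M=Mf])
        fix s assume "s \<in> {t0..b}"
        then show "((\<lambda>s. \<phi> s t0 y) has_vector_derivative f s (\<phi> s t0 y)) (at s within {t0..b})"
          using dvy[OF yU] by auto
      next
        fix s assume s: "s \<in> {t0..b}" and ds: "dist (\<phi> s t0 y) (\<phi> t0 t0 y) \<le> r"
        have "\<phi> t0 t0 y = y" using flow yU by simp
        then have "dist y (\<phi> s t0 y) \<le> r" using ds by (simp add: dist_commute)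
        moreover have "dist x y \<le> r" using y by simp
        moreover have "dist x (\<phi> s t0 y) \<le> dist x y + dist y (\<phi> s t0 y)" by (rule dist_triangle)
        ultimately have "dist x (\<phi> s t0 y) \<le> 2*r" by linarith
        then have "(s, \<phi> s t0 y) \<in> K" using trange[OF s] by (intro inK)
        then show "norm (f s (\<phi> s t0 y)) \<le> Mf" by (rule Mf')
      next
        show "Mf * (b - t0) < r" unfolding b_def using TMf by simp
      qed
      moreover have "\<phi> t0 t0 y = y" using flow yU by simp
      ultimately have "dist y (\<phi> t t0 y) \<le> r" by (simp add: dist_commute)
      moreover have "dist x y \<le> r" using y by simp
      moreover have "dist x (\<phi> t t0 y) \<le> dist x y + dist y (\<phi> t t0 y)" by (rule dist_triangle)
      ultimately have "dist x (\<phi> t t0 y) \<le> 2*r" by linarith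
      then show ?thesis by simp
    qed
    have xr: "x \<in> cball x r" using r0 by simp
    have lipphi: "norm (\<phi> t t0 y - \<phi> t t0 x) \<le> 2 * norm (y - x)" if y: "y \<in> cball x r" and t: "t \<in> {t0..b}" for y t
    proof -
      have yU: "y \<in> U" using inU y .
      have "norm (\<phi> t t0 y - \<phi> t t0 x) \<le> 2 * norm (\<phi> t0 t0 y - \<phi> t0 t0 x)"
      proof (rule lip_curve[OF tb _ _ _ _ t, where w'="\<lambda>s. f s (\<phi> s t0 y) - f s (\<phi> s t0 x)" and L=L])
        fix s assume s: "s \<in> {t0..b}"
        show "((\<lambda>s. \<phi> s t0 y - \<phi> s t0 x) has_vector_derivative f s (\<phi> s t0 y) - f s (\<phi> s t0 x)) (at s within {t0..b})"
          by (intro has_vector_derivative_diff dvy yU U(2) s) simp_all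
        show "norm (f s (\<phi> s t0 y) - f s (\<phi> s t0 x)) \<le> L * norm (\<phi> s t0 y - \<phi> s t0 x)"
          by (rule lipF[OF trange[OF s] conf[OF y s] conf[OF xr s]])
      next
        show "0 \<le> L" using L by simp
        show "L * (b - t0) \<le> 1/2" unfolding b_def using TL by simp
      qed
      then show ?thesis using flow yU U by simp
    qed

    have AcT: "continuous_on {t0..b} A" using Ac bsub by (rule continuous_on_subset)
    have AL: "norm (A s) \<le> L" if s: "s \<in> {t0..b}" for s
      unfolding A_def using conf[OF xr s] trange[OF s] by (intro PL inK) auto
    obtain Y where Yc: "continuous_on {t0..b} Y"
      and Yeq: "\<And>t. t \<in> {t0..b} \<Longrightarrow> Y t = id_blinfun + integral {t0..t} (\<lambda>s. A s o\<^sub>L Y s)"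
    proof -
      have "L * (b - t0) < 1" using TL unfolding b_def by simp
      from lin_ode[OF tb AcT AL _ this] L show ?thesis using that by auto
    qed
    have AYc: "continuous_on {t0..b} (\<lambda>s. A s o\<^sub>L Y s)" by (intro continuous_intros AcT Yc)
    have AYi: "(\<lambda>s. A s o\<^sub>L Y s) integrable_on {t0..t}" if "t \<in> {t0..b}" for t
      by (rule integrable_continuous_interval, rule continuous_on_subset[OF AYc]) (use that in auto)
    have Ybd: "norm (Y t) \<le> 2" if t: "t \<in> {t0..b}" for t
    proof -
      have "norm (Y t) \<le> 2 * 1"
      proof (rule sup_absorb[OF tb Yc _ t])
        fix E u assume E: "\<And>s. s \<in> {t0..b} \<Longrightarrow> norm (Y s) \<le> E" and u: "u \<in> {t0..b}"
        have E0: "0 \<le> E" using E[of t0] tb by (auto intro: order_trans[OF norm_ge_zero])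
        have "norm (integral {t0..u} (\<lambda>s. A s o\<^sub>L Y s)) \<le> (L * E) * (u - t0)"
        proof (rule integral_bound)
          show "t0 \<le> u" using u by simp
          show "continuous_on {t0..u} (\<lambda>s. A s o\<^sub>L Y s)" by (rule continuous_on_subset[OF AYc]) (use u in auto)
          fix s assume s: "s \<in> {t0..u}"
          then have sb: "s \<in> {t0..b}" using u by auto
          have "norm (A s o\<^sub>L Y s) \<le> norm (A s) * norm (Y s)" by (rule norm_blinfun_compose)
          also have "\<dots> \<le> L * E" using AL[OF sb] E[OF sb] L by (intro mult_mono) auto
          finally show "norm (A s o\<^sub>L Y s) \<le> L * E" .
        qed
        also have "\<dots> \<le> (L * E) * T" using u L E0 unfolding b_def by (intro mult_left_mono) auto
        also have "\<dots> = (L * T) * E" by simp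
        also have "\<dots> \<le> (1/2) * E" using TL E0 by (rule mult_right_mono)
        finally have i: "norm (integral {t0..u} (\<lambda>s. A s o\<^sub>L Y s)) \<le> E / 2" by simp
        have "norm (Y u) \<le> norm (id_blinfun :: (real^'n) \<Rightarrow>\<^sub>L (real^'n)) + norm (integral {t0..u} (\<lambda>s. A s o\<^sub>L Y s))"
          unfolding Yeq[OF u] by (rule norm_triangle_ineq)
        also have "\<dots> \<le> 1 + E/2" using norm_blinfun_id_le i by (rule add_mono)
        finally show "norm (Y u) \<le> 1 + E/2" .
      qed
      then show ?thesis by simp
    qed
    have Yint: "norm (integral {t0..t} (\<lambda>s. A s o\<^sub>L Y s)) \<le> 2 * L * T" if t: "t \<in> {t0..b}" for t
    proof -
      have "norm (integral {t0..t} (\<lambda>s. A s o\<^sub>L Y s)) \<le> (L * 2) * (t - t0)"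
      proof (rule integral_bound)
        show "t0 \<le> t" using t by simp
        show "continuous_on {t0..t} (\<lambda>s. A s o\<^sub>L Y s)" by (rule continuous_on_subset[OF AYc]) (use t in auto)
        fix s assume s: "s \<in> {t0..t}"
        then have sb: "s \<in> {t0..b}" using t by auto
        have "norm (A s o\<^sub>L Y s) \<le> norm (A s) * norm (Y s)" by (rule norm_blinfun_compose)
        also have "\<dots> \<le> L * 2" using AL[OF sb] Ybd[OF sb] L by (intro mult_mono) auto
        finally show "norm (A s o\<^sub>L Y s) \<le> L * 2" .
      qed
      also have "\<dots> \<le> (L * 2) * T" using t L unfolding b_def by (intro mult_left_mono) auto
      finally show ?thesis by simp
    qed
    have intphi: "integral {t0..t} (\<lambda>s. f s (\<phi> s t0 y)) = \<phi> t t0 y - y" if y: "y \<in> U" and t: "t \<in> {t0..b}" for y t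
    proof -
      have "((\<lambda>s. f s (\<phi> s t0 y)) has_integral (\<phi> t t0 y - \<phi> t0 t0 y)) {t0..t}"
        by (rule fundamental_theorem_of_calculus) (use t dvy[OF y] in auto)
      then show ?thesis using flow y by (simp add: integral_unique)
    qed
    have fi: "(\<lambda>s. f s (\<phi> s t0 y)) integrable_on {t0..t}" if y: "y \<in> U" and t: "t \<in> {t0..b}" for y t
      by (rule integrable_continuous_interval, rule continuous_on_subset[OF fc[OF y]]) (use t bsub in auto)
    have fcb: "continuous_on {t0..b} (\<lambda>s. f s (\<phi> s t0 y))" if y: "y \<in> U" for y
      using fc[OF y] bsub by (rule continuous_on_subset)
    have trajcb: "continuous_on {t0..b} (\<lambda>s. \<phi> s t0 y)" if y: "y \<in> U" for y
      using trajc[OF y] bsub by (rule continuous_on_subset)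
    have bb: "b \<in> {t0..b}" using tb by simp
    show "\<exists>Lb. (time_map \<phi> t0 T has_derivative blinfun_apply Lb) (at x)
            \<and> norm (Lb - id_blinfun - T *\<^sub>R (F' (t0, x) o\<^sub>L emb)) \<le> \<eta> * T"
    proof (intro exI[of _ "Y b"] conjI)
      show "(time_map \<phi> t0 T has_derivative blinfun_apply (Y b)) (at x)"
        unfolding has_derivative_at_alt
      proof (intro conjI allI impI blinfun.bounded_linear_right)
        fix e :: real assume e: "e > 0"
        define e' where "e' = e / (4 * T)"
        have e'0: "e' > 0" unfolding e'_def using e T0 by simp
        obtain \<delta>l where \<delta>l: "\<delta>l > 0" "\<And>t a c. \<bar>t - t0\<bar> \<le> 2*r \<Longrightarrow> a \<in> cball x (2*r) \<Longrightarrow> c \<in> cball x (2*r) \<Longrightarrow> norm (a - c) < \<delta>l \<Longrightarrow>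
            norm (f t a - f t c - P (t, c) (a - c)) \<le> e' * norm (a - c)"
          using lin[OF e'0] by blast
        show "\<exists>d>0. \<forall>y. norm (y - x) < d \<longrightarrow>
            norm (time_map \<phi> t0 T y - time_map \<phi> t0 T x - blinfun_apply (Y b) (y - x)) \<le> e * norm (y - x)"
        proof (intro exI[of _ "min r (\<delta>l/2)"] conjI allI impI)
          show "min r (\<delta>l/2) > 0" using r0 \<delta>l by simp
          fix y assume ny: "norm (y - x) < min r (\<delta>l/2)"
          define h where "h = y - x"
          have yr: "y \<in> cball x r" using ny by (simp add: dist_norm norm_minus_commute)
          have yU: "y \<in> U" using inU yr .
          define ee where "ee t = (\<phi> t t0 y - \<phi> t t0 x) - Y t h" for t
          have AYhc: "continuous_on {t0..b} (\<lambda>s. A s (Y s h))" by (intro continuous_intros AcT Yc)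
          have eei: "ee t = integral {t0..t} (\<lambda>s. (f s (\<phi> s t0 y) - f s (\<phi> s t0 x)) - A s (Y s h))"
            if t: "t \<in> {t0..b}" for t
          proof -
            have AYhi: "(\<lambda>s. A s (Y s h)) integrable_on {t0..t}"
              by (rule integrable_continuous_interval, rule continuous_on_subset[OF AYhc]) (use t in auto)
            have "integral {t0..t} (\<lambda>s. A s (Y s h)) = blinfun_apply (integral {t0..t} (\<lambda>s. A s o\<^sub>L Y s)) h"
              using integral_linear[OF AYi[OF t] bounded_linear_apply_blinfun[of h]] by (simp add: o_def)
            also have "integral {t0..t} (\<lambda>s. A s o\<^sub>L Y s) = Y t - id_blinfun" using Yeq[OF t] by simp
            finally have i3: "integral {t0..t} (\<lambda>s. A s (Y s h)) = Y t h - h" by (simp add: blinfun.diff_left)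
            have "integral {t0..t} (\<lambda>s. (f s (\<phi> s t0 y) - f s (\<phi> s t0 x)) - A s (Y s h))
                = (integral {t0..t} (\<lambda>s. f s (\<phi> s t0 y)) - integral {t0..t} (\<lambda>s. f s (\<phi> s t0 x))) - integral {t0..t} (\<lambda>s. A s (Y s h))"
              using fi[OF yU t] fi[OF U(2) t] AYhi by (simp add: integral_diff integrable_diff)
            also have "\<dots> = ee t" unfolding intphi[OF yU t] intphi[OF U(2) t] i3 ee_def
              by (simp add: algebra_simps h_def)
            finally show ?thesis by simp
          qed
          have eec: "continuous_on {t0..b} ee" unfolding ee_def
            by (intro continuous_intros trajcb yU U(2) Yc)
          have "norm (ee b) \<le> 2 * (2 * e' * T * norm h)"
          proof (rule sup_absorb[OF tb eec _ bb])
            fix E u assume E: "\<And>s. s \<in> {t0..b} \<Longrightarrow> norm (ee s) \<le> E" and u: "u \<in> {t0..b}"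
            have E0: "0 \<le> E" using E[of t0] tb by (auto intro: order_trans[OF norm_ge_zero])
            have "norm (ee u) \<le> (2 * e' * norm h + L * E) * (u - t0)"
              unfolding eei[OF u]
            proof (rule integral_bound)
              show "t0 \<le> u" using u by simp
              show "continuous_on {t0..u} (\<lambda>s. (f s (\<phi> s t0 y) - f s (\<phi> s t0 x)) - A s (Y s h))"
                by (rule continuous_on_subset[of "{t0..b}"]) (intro continuous_intros fcb yU U(2) AYhc, use u in auto)
              fix s assume s: "s \<in> {t0..u}"
              then have sb: "s \<in> {t0..b}" using u by auto
              define w where "w = \<phi> s t0 y - \<phi> s t0 x"
              have Yh: "Y s h = w - ee s" unfolding ee_def w_def by simp
              have eq: "(f s (\<phi> s t0 y) - f s (\<phi> s t0 x)) - A s (Y s h)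
                  = (f s (\<phi> s t0 y) - f s (\<phi> s t0 x) - P (s, \<phi> s t0 x) (\<phi> s t0 y - \<phi> s t0 x)) + A s (ee s)"
                unfolding Yh A_def w_def by (simp add: blinfun.diff_right blinfun.add_right algebra_simps)
              have nw: "norm (\<phi> s t0 y - \<phi> s t0 x) \<le> 2 * norm h" unfolding h_def by (rule lipphi[OF yr sb])
              have "norm (\<phi> s t0 y - \<phi> s t0 x) < \<delta>l" using nw ny unfolding h_def by simp
              then have l1: "norm (f s (\<phi> s t0 y) - f s (\<phi> s t0 x) - P (s, \<phi> s t0 x) (\<phi> s t0 y - \<phi> s t0 x))
                  \<le> e' * norm (\<phi> s t0 y - \<phi> s t0 x)"
                by (intro \<delta>l(2) trange[OF sb] conf[OF yr sb] conf[OF xr sb])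
              also have "\<dots> \<le> e' * (2 * norm h)" using nw e'0 by (intro mult_left_mono) auto
              finally have l1': "norm (f s (\<phi> s t0 y) - f s (\<phi> s t0 x) - P (s, \<phi> s t0 x) (\<phi> s t0 y - \<phi> s t0 x)) \<le> 2 * e' * norm h"
                by simp
              have "norm (A s (ee s)) \<le> norm (A s) * norm (ee s)" by (rule norm_blinfun)
              also have "\<dots> \<le> L * E" using AL[OF sb] E[OF sb] L by (intro mult_mono) auto
              finally have l2: "norm (A s (ee s)) \<le> L * E" .
              show "norm ((f s (\<phi> s t0 y) - f s (\<phi> s t0 x)) - A s (Y s h)) \<le> 2 * e' * norm h + L * E"
                unfolding eq using norm_triangle_ineq l1' l2 by (smt (verit))
            qed
            also have "\<dots> \<le> (2 * e' * norm h + L * E) * T"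
              using u e'0 L E0 unfolding b_def by (intro mult_left_mono) auto
            also have "\<dots> = 2 * e' * T * norm h + (L * T) * E" by (simp add: algebra_simps)
            also have "\<dots> \<le> 2 * e' * T * norm h + (1/2) * E" using TL E0 by (intro add_left_mono mult_right_mono)
            finally show "norm (ee u) \<le> 2 * e' * T * norm h + E / 2" by simp
          qed
          also have "\<dots> = e * norm h" unfolding e'_def using T0 by simp
          finally have "norm (ee b) \<le> e * norm h" .
          then show "norm (time_map \<phi> t0 T y - time_map \<phi> t0 T x - blinfun_apply (Y b) (y - x)) \<le> e * norm (y - x)"
            unfolding time_map_def ee_def h_def b_def by (simp add: algebra_simps)
        qed
      qed
    next
      define P0 where "P0 = F' (t0, x) o\<^sub>L emb"
      have P0L: "norm P0 \<le> L" unfolding P0_def using PL[of "(t0, x)"] inK[of t0 x] r0 unfolding P_def by simp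
      have AP0: "A t0 = P0" unfolding P0_def using A0 P_def by simp
      have "Y b - id_blinfun - T *\<^sub>R P0 = integral {t0..b} (\<lambda>s. A s o\<^sub>L Y s) - integral {t0..b} (\<lambda>s. P0)"
        using Yeq[OF bb] tb unfolding b_def by simp
      also have "\<dots> = integral {t0..b} (\<lambda>s. (A s o\<^sub>L Y s) - P0)"
        by (rule integral_diff[symmetric]) (use AYi[OF bb] in auto)
      also have "norm \<dots> \<le> \<eta> * (b - t0)"
      proof (rule integral_bound[OF tb])
        show "continuous_on {t0..b} (\<lambda>s. (A s o\<^sub>L Y s) - P0)" by (intro continuous_intros AYc)
        fix s assume sb: "s \<in> {t0..b}"
        have eq: "(A s o\<^sub>L Y s) - P0 = ((A s - P0) o\<^sub>L Y s) + (P0 o\<^sub>L (Y s - id_blinfun))"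
          by (rule blinfun_eqI) (simp add: blinfun.diff_left blinfun.diff_right blinfun.add_left)
        have "dist (A s) (A t0) < \<eta>/4"
          by (rule dA(2)) (use sb bsub TdA in \<open>auto simp: b_def dist_real_def\<close>)
        then have nA: "norm (A s - P0) \<le> \<eta>/4" using AP0 by (simp add: dist_norm)
        have nY: "norm (Y s - id_blinfun) \<le> 2 * L * T"
          using Yeq[OF sb] Yint[OF sb] by simp
        have "norm ((A s o\<^sub>L Y s) - P0) \<le> norm ((A s - P0) o\<^sub>L Y s) + norm (P0 o\<^sub>L (Y s - id_blinfun))"
          unfolding eq by (rule norm_triangle_ineq)
        also have "\<dots> \<le> norm (A s - P0) * norm (Y s) + norm P0 * norm (Y s - id_blinfun)"
          by (intro add_mono norm_blinfun_compose)
        also have "\<dots> \<le> (\<eta>/4) * 2 + L * (2 * L * T)"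
          using nA Ybd[OF sb] P0L nY \<eta> L by (intro add_mono mult_mono) auto
        also have "\<dots> \<le> \<eta>"
        proof -
          have "L * (2 * L * T) = 2 * L^2 * T" by (simp add: power2_eq_square)
          then show ?thesis using TL2 \<eta> by linarith
        qed
        finally show "norm ((A s o\<^sub>L Y s) - P0) \<le> \<eta>" .
      qed
      finally show "norm (Y b - id_blinfun - T *\<^sub>R (F' (t0, x) o\<^sub>L emb)) \<le> \<eta> * T"
        unfolding P0_def b_def by simp
    qed
  qed
qed



lemma Nm_matrix:
  fixes Lb P0 :: "(real^3) \<Rightarrow>\<^sub>L (real^3)"
  shows "Nm (matrix (blinfun_apply Lb) - mat 1 - T *\<^sub>R matrix (blinfun_apply P0)) \<le> 9 * norm (Lb - id_blinfun - T *\<^sub>R P0)"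
proof -
  define \<Delta> where "\<Delta> = Lb - id_blinfun - T *\<^sub>R P0"
  have ent: "\<bar>(matrix (blinfun_apply Lb) - mat 1 - T *\<^sub>R matrix (blinfun_apply P0)) $ i $ j\<bar> \<le> norm \<Delta>" for i j
  proof -
    have "(matrix (blinfun_apply Lb) - mat 1 - T *\<^sub>R matrix (blinfun_apply P0)) $ i $ j = \<Delta> (axis j 1) $ i"
      unfolding \<Delta>_def by (simp add: matrix_def mat_def axis_def blinfun.diff_left blinfun.scaleR_left)
    also have "\<bar>\<dots>\<bar> \<le> norm (\<Delta> (axis j 1))" by (rule component_le_norm_cart)
    also have "\<dots> \<le> norm \<Delta> * norm (axis j 1 :: real^3)" by (rule norm_blinfun)
    finally show ?thesis by simp
  qed
  have "Nm (matrix (blinfun_apply Lb) - mat 1 - T *\<^sub>R matrix (blinfun_apply P0)) \<le> (\<Sum>i\<in>(UNIV::3 set). \<Sum>j\<in>(UNIV::3 set). norm \<Delta>)"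
    unfolding Nm_def by (intro sum_mono ent)
  also have "\<dots> = 9 * norm \<Delta>" by simp
  finally show ?thesis unfolding \<Delta>_def .
qed

theorem mainTheorem4:
  fixes f :: "real \<Rightarrow> real^3 \<Rightarrow> real^3"
    and \<phi> :: "real \<Rightarrow> real \<Rightarrow> real^3 \<Rightarrow> real^3"
    and D :: "(real \<times> (real^3)) set"
    and t0 :: real and x :: "real^3" and U :: "(real^3) set" and \<epsilon> :: real
  assumes D_open: "open D"
    and f_C3: "C3_on D (\<lambda>(t, y). f t y)"
    and incompressible: "\<forall>(t, y)\<in>D. trace (jacobian (f t) (at y)) = 0"
    and base: "(t0, x) \<in> D"
    and det_nz: "det (jacobian (f t0) (at x)) \<noteq> 0"
    and U: "open U" "x \<in> U" and eps: "\<epsilon> > 0"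
    and flow: "\<forall>y\<in>U. \<phi> t0 t0 y = y \<and>
        (\<forall>t\<in>{t0..t0+\<epsilon>}. (t, \<phi> t t0 y) \<in> D \<and>
           ((\<lambda>s. \<phi> s t0 y) has_vector_derivative f t (\<phi> t t0 y)) (at t within {t0..t0+\<epsilon>}))"
  shows "\<exists>Tmin>0. \<forall>T. 0 < T \<and> T < Tmin \<longrightarrow>
           time_map \<phi> t0 T differentiable (at x) \<and> mesohyperbolic \<phi> t0 T x"
proof -
  obtain F' where F'd: "\<And>z. z \<in> D \<Longrightarrow> ((\<lambda>(t, y). f t y) has_derivative blinfun_apply (F' z)) (at z)"
    and C2: "C2_on D F'"
    using f_C3 unfolding C3_on_def by blast
  obtain F'' where F''d: "\<And>z. z \<in> D \<Longrightarrow> (F' has_derivative blinfun_apply (F'' z)) (at z)"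
    using C2 unfolding C2_on_def by blast
  have F'c: "continuous_on D F'"
    by (rule continuous_at_imp_continuous_on) (use F''d has_derivative_continuous in blast)
  define P0 where "P0 = F' (t0, x) o\<^sub>L emb"
  have pd: "(f t0 has_derivative blinfun_apply P0) (at x)"
    unfolding P0_def by (rule partial_deriv[OF F'd[OF base]])
  define A0 where "A0 = jacobian (f t0) (at x)"
  have A0m: "A0 = matrix (blinfun_apply P0)"
    unfolding A0_def jacobian_def using frechet_derivative_at[OF pd] by simp
  have tr: "trace A0 = 0" using incompressible base unfolding A0_def by auto
  have dt: "det A0 \<noteq> 0" using det_nz unfolding A0_def .
  obtain \<eta> T0 where \<eta>: "\<eta> > 0" and T0: "T0 > 0" and LAp: "\<And>T M. 0 < T \<Longrightarrow> T < T0 \<Longrightarrow> Nm (M - mat 1 - T *\<^sub>R A0) \<le> \<eta> * T \<Longrightarrow>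
            (\<forall>c. is_eigenvalue M c \<longrightarrow> cmod c \<noteq> 1)"
    using LA_main[OF tr dt] by blast
  have \<eta>9: "\<eta>/9 > 0" using \<eta> by simp
  obtain T1 where T1: "T1 > 0" and ANp: "\<And>T. 0 < T \<and> T < T1 \<Longrightarrow> (\<exists>Lb. (time_map \<phi> t0 T has_derivative blinfun_apply Lb) (at x)
            \<and> norm (Lb - id_blinfun - T *\<^sub>R (F' (t0, x) o\<^sub>L emb)) \<le> \<eta>/9 * T)"
    using AN[where f=f and F'=F' and D=D and \<phi>=\<phi>, OF D_open F'c F'd base U eps flow \<eta>9] by blast
  show ?thesis
  proof (intro exI[of _ "min T0 T1"] conjI allI impI)
    show "min T0 T1 > 0" using T0 T1 by simp
    fix T assume T: "0 < T \<and> T < min T0 T1"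
    then obtain Lb where hd: "(time_map \<phi> t0 T has_derivative blinfun_apply Lb) (at x)"
      and nb: "norm (Lb - id_blinfun - T *\<^sub>R P0) \<le> \<eta>/9 * T"
      using ANp[of T] unfolding P0_def by auto
    show "time_map \<phi> t0 T differentiable (at x)" using hd by (rule differentiableI)
    have J: "jacobian (time_map \<phi> t0 T) (at x) = matrix (blinfun_apply Lb)"
      unfolding jacobian_def using frechet_derivative_at[OF hd] by simp
    have "Nm (jacobian (time_map \<phi> t0 T) (at x) - mat 1 - T *\<^sub>R A0) \<le> 9 * norm (Lb - id_blinfun - T *\<^sub>R P0)"
      unfolding J A0m by (rule Nm_matrix)
    also have "\<dots> \<le> \<eta> * T" using nb by simp
    finally have "Nm (jacobian (time_map \<phi> t0 T) (at x) - mat 1 - T *\<^sub>R A0) \<le> \<eta> * T" .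
    then show "mesohyperbolic \<phi> t0 T x"
      unfolding mesohyperbolic_def using LAp[of T] T by auto
  qed
qed


end
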